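(* If two groups $\mathsf G^{(e_2,e_3,h_2,h_3)}_\beta$ and $\mathsf G^{(e_2',e_3',h_2',h_3')}_{\beta'}$ (as defined in the context) are isomorphic as algebraic permutation groups, then $(e_2',e_3',h_2',h_3')=(e_2,e_3,h_2,h_3)$.
   Context: Let $\mathsf k$ be an algebraically closed field. For admissible data, $\mathsf G^{(e_2,e_3,h_2,h_3)}_\beta=(G,\mathsf k^2,\overline\Omega)$ denotes the following group. On $\mathsf k^3$ define $(x_1,x_2,x_3)(y_1,y_2,y_3)=\big(x_1+y_1+\psi_1(x_3,y_2,y_3),\ x_2+y_2+\psi_2(x_3,y_3),\ x_3+y_3\big)$ with $\psi_1(x_3,y_2,y_3)=y_2^{h_2}x_3^{h_3}+\beta(x_3,y_3)$, $h_i=p^{l_i}$ if $\mathrm{char}\,\mathsf k=p>0$ and $h_i=1$ otherwise, and either (A) $\psi_2=0$ and $\beta\in\{0,\ \sum_{i=1}^{p-1}\frac1p\binom pi x_3^{ip^r}y_3^{(p-i)p^r},\ x_3^{p^r}y_3^{p^s}\}$ ($r<s$; nonzero options only in characteristic $p>0$), or (B) $\mathrm{char}\,\mathsf k=p>2$, $\psi_2=x_3^{p^m}y_3^{p^n}$ with $m<n$, $l_3-l_2\in\{m,n\}$, and $\beta=\frac12x_3^{2p^{l_3}}y_3^{p^{l_2+n}}$ if $l_3-l_2=m$, $\beta=x_3^{p^{l_3}+p^{l_2+m}}y_3^{p^{l_3}}+\frac12x_3^{p^{l_2+m}}y_3^{2p^{l_3}}$ if $l_3-l_2=n$. $a\in\mathsf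 k^*$ acts on $\mathsf k^3$ by $(u_1,u_2,u_3)\mapsto(a^{e_1}u_1,a^{e_2}u_2,a^{e_3}u_3)$ with $e_3$ a positive power of $p$ (or $1$ in characteristic $0$), $e_1=e_2h_2+e_3h_3$, and if $\beta\neq0$ also $e_1=e_3\deg\beta$, $e_2=e_3(\deg\beta-h_3)/h_2$. $G=\mathsf k^3\rtimes\mathsf k^*$ for this action; it acts on $\mathsf k^2$ by $(u_1,u_2,u_3,a)\cdot(x,y)=\big(u_1+a^{e_1}x+\psi_1(u_3,0,a^{e_3}y),\ u_3+a^{e_3}y\big)$, and the blocks $\overline\Omega$ are the horizontal lines $y=\text{const}$. An isomorphism of algebraic permutation groups is a pair $(\Phi_1,\Phi_2)$ with $\Phi_1$ an isomorphism of algebraic groups and $\Phi_2:\mathsf k^2\to\mathsf k^2$ a bijective morphism mapping blocks onto blocks with $\Phi_2(g(P))=\Phi_1(g)(\Phi_2(P))$. *)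

theory Defs
  imports "HOL-Computational_Algebra.Polynomial"
begin

text \<open>The shape of beta: A with beta = 0, A with the binomial sum,
  A with the monomial x3^(p^r) y3^(p^s), and case B (psi2 = x3^(p^m) y3^(p^n),
  with m = r, n = s).\<close>
datatype bkind = Bzero | Bsum | Bmono | TypeB

record gdata =
  d_e2 :: int
  d_e3 :: nat
  d_l2 :: nat
  d_l3 :: nat
  d_bk :: bkind
  d_r :: nat
  d_s :: nat

definition hexp :: "nat \<Rightarrow> nat \<Rightarrow> nat" where
  "hexp p l = (if p = 0 then 1 else p ^ l)"

definition h2 :: "'k::field itself \<Rightarrow> gdata \<Rightarrow> nat" where
  "h2 T d = hexp CHAR('k) (d_l2 d)"

definition h3 :: "'k::field itself \<Rightarrow> gdata \<Rightarrow> nat" where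
  "h3 T d = hexp CHAR('k) (d_l3 d)"

definition beta :: "gdata \<Rightarrow> 'k::field \<Rightarrow> 'k \<Rightarrow> 'k" where
  "beta d x y = (let p = CHAR('k); r = d_r d; s = d_s d; l2 = d_l2 d; l3 = d_l3 d in
     case d_bk d of
       Bzero \<Rightarrow> 0
     | Bsum \<Rightarrow> (\<Sum>i\<in>{1..p-1}. of_nat ((p choose i) div p) * x ^ (i * p ^ r) * y ^ ((p - i) * p ^ r))
     | Bmono \<Rightarrow> x ^ (p ^ r) * y ^ (p ^ s)
     | TypeB \<Rightarrow> (if l3 = l2 + r
                 then inverse 2 * x ^ (2 * p ^ l3) * y ^ (p ^ (l2 + s))
                 else x ^ (p ^ l3 + p ^ (l2 + r)) * y ^ (p ^ l3)
                      + inverse 2 * x ^ (p ^ (l2 + r)) * y ^ (2 * p ^ l3)))"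

text \<open>Total degree of beta (only used when beta is nonzero).\<close>
definition degbeta :: "'k::field itself \<Rightarrow> gdata \<Rightarrow> nat" where
  "degbeta T d = (let p = CHAR('k); r = d_r d; s = d_s d; l2 = d_l2 d; l3 = d_l3 d in
     case d_bk d of
       Bzero \<Rightarrow> 0
     | Bsum \<Rightarrow> p ^ (r + 1)
     | Bmono \<Rightarrow> p ^ r + p ^ s
     | TypeB \<Rightarrow> (if l3 = l2 + r then 2 * p ^ l3 + p ^ (l2 + s)
                 else 2 * p ^ l3 + p ^ (l2 + r)))"

definition psi1 :: "gdata \<Rightarrow> 'k::field \<Rightarrow> 'k \<Rightarrow> 'k \<Rightarrow> 'k" where
  "psi1 d x3 y2 y3 = y2 ^ h2 TYPE('k) d * x3 ^ h3 TYPE('k) d + beta d x3 y3"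

definition psi2 :: "gdata \<Rightarrow> 'k::field \<Rightarrow> 'k \<Rightarrow> 'k" where
  "psi2 d x3 y3 = (if d_bk d = TypeB
      then x3 ^ (CHAR('k) ^ d_r d) * y3 ^ (CHAR('k) ^ d_s d) else 0)"

definition e1 :: "'k::field itself \<Rightarrow> gdata \<Rightarrow> int" where
  "e1 T d = d_e2 d * int (h2 T d) + int (d_e3 d) * int (h3 T d)"

definition admissible :: "'k::field itself \<Rightarrow> gdata \<Rightarrow> bool" where
  "admissible T d \<longleftrightarrow>
     (if CHAR('k) = 0 then d_e3 d = 1 else (\<exists>t>0. d_e3 d = CHAR('k) ^ t))
   \<and> (d_bk d \<in> {Bsum, Bmono} \<longrightarrow> CHAR('k) > 0)
   \<and> (d_bk d = Bmono \<longrightarrow> d_r d < d_s d)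
   \<and> (d_bk d = TypeB \<longrightarrow> CHAR('k) > 2 \<and> d_r d < d_s d
        \<and> (d_l3 d = d_l2 d + d_r d \<or> d_l3 d = d_l2 d + d_s d))
   \<and> (d_bk d \<noteq> Bzero \<longrightarrow>
        e1 T d = int (d_e3 d) * int (degbeta T d)
      \<and> d_e2 d * int (h2 T d) = int (d_e3 d) * (int (degbeta T d) - int (h3 T d)))"

definition mult3 :: "gdata \<Rightarrow> 'k::field \<times> 'k \<times> 'k \<Rightarrow> 'k \<times> 'k \<times> 'k \<Rightarrow> 'k \<times> 'k \<times> 'k" where
  "mult3 d x y = (case x of (x1, x2, x3) \<Rightarrow> case y of (y1, y2, y3) \<Rightarrow>
     (x1 + y1 + psi1 d x3 y2 y3, x2 + y2 + psi2 d x3 y3, x3 + y3))"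

definition tact :: "gdata \<Rightarrow> 'k::field \<Rightarrow> 'k \<times> 'k \<times> 'k \<Rightarrow> 'k \<times> 'k \<times> 'k" where
  "tact d a u = (case u of (u1, u2, u3) \<Rightarrow>
     (a powi e1 TYPE('k) d * u1, a powi d_e2 d * u2, a ^ d_e3 d * u3))"

text \<open>The group G = k^3 semidirect k^*, elements ((u1,u2,u3), a) with a nonzero.\<close>
definition Gcarrier :: "(('k::field \<times> 'k \<times> 'k) \<times> 'k) set" where
  "Gcarrier = {g. snd g \<noteq> 0}"

definition Gmult :: "gdata \<Rightarrow> ('k::field \<times> 'k \<times> 'k) \<times> 'k \<Rightarrow> ('k \<times> 'k \<times> 'k) \<times> 'k \<Rightarrow> ('k \<times> 'k \<times> 'k) \<times> 'k" where
  "Gmult d g h = (case g of (u, a) \<Rightarrow> case h of (v, b) \<Rightarrow> (mult3 d u (tact d a v), a * b))"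

definition Gact :: "gdata \<Rightarrow> ('k::field \<times> 'k \<times> 'k) \<times> 'k \<Rightarrow> 'k \<times> 'k \<Rightarrow> 'k \<times> 'k" where
  "Gact d g P = (case g of ((u1, u2, u3), a) \<Rightarrow> case P of (x, y) \<Rightarrow>
     (u1 + a powi e1 TYPE('k) d * x + psi1 d u3 0 (a ^ d_e3 d * y), u3 + a ^ d_e3 d * y))"

inductive_set pfun :: "('a \<Rightarrow> 'k::field) set \<Rightarrow> ('a \<Rightarrow> 'k) set" for gens where
  gen: "f \<in> gens \<Longrightarrow> f \<in> pfun gens"
| const: "(\<lambda>_. c) \<in> pfun gens"
| add: "f \<in> pfun gens \<Longrightarrow> g \<in> pfun gens \<Longrightarrow> (\<lambda>x. f x + g x) \<in> pfun gens"
| mul: "f \<in> pfun gens \<Longrightarrow> g \<in> pfun gens \<Longrightarrow> (\<lambda>x. f x * g x) \<in> pfun gens"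

text \<open>Coordinate ring of the variety k^3 x k^*: k[u1,u2,u3,a,a^-1].\<close>
definition Gregular :: "((('k::field \<times> 'k \<times> 'k) \<times> 'k) \<Rightarrow> 'k) set" where
  "Gregular = pfun {\<lambda>g. fst (fst g), \<lambda>g. fst (snd (fst g)), \<lambda>g. snd (snd (fst g)),
                    \<lambda>g. snd g, \<lambda>g. inverse (snd g)}"

definition Gmorph :: "((('k::field \<times> 'k \<times> 'k) \<times> 'k) \<Rightarrow> (('k \<times> 'k \<times> 'k) \<times> 'k)) \<Rightarrow> bool" where
  "Gmorph f \<longleftrightarrow> f ` Gcarrier \<subseteq> Gcarrier \<and>
     (\<forall>c \<in> {\<lambda>g. fst (fst g), \<lambda>g. fst (snd (fst g)), \<lambda>g. snd (snd (fst g)), \<lambda>g. snd g}.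
        \<exists>q \<in> Gregular. \<forall>g \<in> Gcarrier. c (f g) = q g)"

definition A2morph :: "('k::field \<times> 'k \<Rightarrow> 'k \<times> 'k) \<Rightarrow> bool" where
  "A2morph f \<longleftrightarrow> (\<lambda>P. fst (f P)) \<in> pfun {fst, snd} \<and> (\<lambda>P. snd (f P)) \<in> pfun {fst, snd}"

text \<open>Isomorphism of algebraic permutation groups (G_d, k^2, horizontal lines)
  to (G_d', k^2, horizontal lines).\<close>
definition alg_perm_iso :: "'k::field itself \<Rightarrow> gdata \<Rightarrow> gdata
    \<Rightarrow> ((('k \<times> 'k \<times> 'k) \<times> 'k) \<Rightarrow> (('k \<times> 'k \<times> 'k) \<times> 'k)) \<Rightarrow> ('k \<times> 'k \<Rightarrow> 'k \<times> 'k) \<Rightarrow> bool" where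
  "alg_perm_iso T d d' \<Phi>1 \<Phi>2 \<longleftrightarrow>
     bij_betw \<Phi>1 Gcarrier Gcarrier
   \<and> (\<forall>g \<in> Gcarrier. \<forall>h \<in> Gcarrier. \<Phi>1 (Gmult d g h) = Gmult d' (\<Phi>1 g) (\<Phi>1 h))
   \<and> Gmorph \<Phi>1
   \<and> (\<exists>\<Psi>. Gmorph \<Psi> \<and> (\<forall>g \<in> Gcarrier. \<Psi> (\<Phi>1 g) = g \<and> \<Phi>1 (\<Psi> g) = g))
   \<and> bij \<Phi>2 \<and> A2morph \<Phi>2
   \<and> (\<forall>c. \<exists>c'. \<Phi>2 ` {P. snd P = c} = {P. snd P = c'})
   \<and> (\<forall>g \<in> Gcarrier. \<forall>P. \<Phi>2 (Gact d g P) = Gact d' (\<Phi>1 g) (\<Phi>2 P))"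

end

theory Submission imports Defs "HOL-Computational_Algebra.Primes" begin

lemma alg_closed_infinite: "infinite (UNIV :: 'k::alg_closed_field set)"
proof
  assume fin: "finite (UNIV :: 'k set)"
  define p :: "'k poly" where "p = (\<Prod>a\<in>UNIV. [:-a,1:]) + 1"
  have d1: "degree (\<Prod>a\<in>(UNIV::'k set). [:-a,1:]) = card (UNIV::'k set)"
    by (subst degree_prod_eq_sum_degree) auto
  have "card (UNIV :: 'k set) > 0" using fin by (simp add: card_gt_0_iff)
  hence "degree p > 0" unfolding p_def using d1
    by (metis degree_add_eq_left degree_1 )
  then obtain x where "poly p x = 0" using alg_closed_imp_poly_has_root by blast
  moreover have "poly (\<Prod>a\<in>(UNIV::'k set). [:-a,1:]) x = 0"
    by (simp add: poly_prod fin)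
  ultimately show False by (simp add: p_def)
qed

lemma poly_eq_on_infinite:
  fixes p q :: "'k::field poly"
  assumes "infinite S" "\<forall>x\<in>S. poly p x = poly q x"
  shows "p = q"
proof (rule ccontr)
  assume "p \<noteq> q"
  hence "p - q \<noteq> 0" by simp
  hence "finite {x. poly (p - q) x = 0}" by (rule poly_roots_finite)
  moreover have "S \<subseteq> {x. poly (p - q) x = 0}" using assms(2) by auto
  ultimately show False using assms(1) finite_subset by blast
qed

lemma poly_eq_univ:
  fixes p q :: "'k::alg_closed_field poly"
  assumes "\<forall>x. poly p x = poly q x" shows "p = q"
  using poly_eq_on_infinite[OF alg_closed_infinite] assms by blast

lemma nonzero_infinite: "infinite {x :: 'k::alg_closed_field. x \<noteq> 0}"
proof -
  have "UNIV = insert 0 {x :: 'k. x \<noteq> 0}" by auto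
  thus ?thesis using alg_closed_infinite[where 'k='k] by (metis finite_insert)
qed

lemma poly_linear:
  fixes P Q :: "'k::alg_closed_field poly"
  assumes "\<forall>t. poly P (poly Q t) = t" "poly P 0 = 0"
  shows "\<exists>c. c \<noteq> 0 \<and> (\<forall>t. poly P t = c * t)"
proof -
  have "pcompose P Q = [:0,1:]"
    by (rule poly_eq_univ) (simp add: poly_pcompose assms)
  hence "degree (pcompose P Q) = 1" by simp
  hence "degree P * degree Q = 1" by (simp add: degree_pcompose)
  hence dP: "degree P = 1" by simp
  have "coeff P 0 = 0" using assms(2) by (simp add: poly_0_coeff_0)
  moreover have "coeff P 1 \<noteq> 0"
  proof -
    have "P \<noteq> 0" using dP by auto
    hence "lead_coeff P \<noteq> 0" by simp
    thus ?thesis using dP by simp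
  qed
  moreover have "poly P t = coeff P 0 + coeff P 1 * t" for t
    using dP by (simp add: poly_altdef atMost_Suc mult.commute)
  ultimately show ?thesis by (intro exI[of _ "coeff P 1"]) (auto simp: mult.commute)
qed

lemma poly_noroot_const:
  fixes P :: "'k::alg_closed_field poly"
  assumes "\<forall>t. poly P t \<noteq> 0" shows "poly P t = poly P 0"
proof -
  have "degree P = 0" using alg_closed_imp_poly_has_root assms by blast
  then obtain c where "P = [:c:]" by (rule degree_eq_zeroE)
  thus ?thesis by simp
qed

lemma monom_fun_eq:
  fixes a b :: "'k::alg_closed_field"
  assumes "\<forall>t. a * t ^ m = b * t ^ n" "a \<noteq> 0" shows "m = n"
proof -
  have "monom a m = monom b n" by (rule poly_eq_univ) (simp add: poly_monom assms)
  hence "coeff (monom a m) m = coeff (monom b n) m" by simp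
  thus ?thesis using assms(2) by (auto split: if_splits)
qed

lemma pow_all_one:
  fixes m :: nat
  assumes "\<forall>a::'k::alg_closed_field. a \<noteq> 0 \<longrightarrow> a ^ m = 1" shows "m = 0"
proof (rule ccontr)
  assume "m \<noteq> 0"
  hence c1: "coeff (monom (1::'k) m - 1) m = 1" by simp
  have ne: "monom (1::'k) m - 1 \<noteq> 0"
  proof
    assume "monom (1::'k) m - 1 = 0"
    hence "coeff (monom (1::'k) m - 1) m = 0" by simp
    with c1 show False by simp
  qed
  have "{x :: 'k. x \<noteq> 0} \<subseteq> {x. poly (monom 1 m - 1) x = 0}" using assms by (auto simp: poly_monom)
  thus False using poly_roots_finite[OF ne] nonzero_infinite finite_subset by blast
qed

lemma powi_all_eq:
  fixes m n :: int
  assumes "\<forall>a::'k::alg_closed_field. a \<noteq> 0 \<longrightarrow> a powi m = a powi n" shows "m = n"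
proof -
  have "\<forall>a::'k. a \<noteq> 0 \<longrightarrow> a ^ nat \<bar>m - n\<bar> = 1"
  proof (intro allI impI)
    fix a :: 'k assume a: "a \<noteq> 0"
    have "a powi (m - n) = 1" using assms a by (simp add: power_int_diff)
    thus "a ^ nat \<bar>m - n\<bar> = 1"
      by (cases "m - n \<ge> 0") (auto simp: power_int_def power_inverse split: if_splits)
  qed
  from pow_all_one[OF this] show ?thesis by simp
qed


lemma hexp_pos: "hexp p l > 0" by (simp add: hexp_def)
lemma h2_pos: "h2 T d > 0" by (simp add: h2_def hexp_pos)
lemma h3_pos: "h3 T d > 0" by (simp add: h3_def hexp_pos)

lemma beta_x0:
  assumes "admissible TYPE('k::field) d" shows "beta d (0::'k) y = 0"
proof (cases "d_bk d")
  case Bsum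
  hence p: "CHAR('k) > 0" using assms by (simp add: admissible_def)
  show ?thesis using Bsum p by (auto simp: beta_def Let_def intro!: sum.neutral)
next
  case Bmono
  hence p: "CHAR('k) > 0" using assms by (simp add: admissible_def)
  show ?thesis using Bmono p by (auto simp: beta_def Let_def)
next
  case TypeB
  hence p: "CHAR('k) > 2" using assms by (simp add: admissible_def)
  show ?thesis using TypeB p by (auto simp: beta_def Let_def power_0_left)
qed (simp add: beta_def)

lemma beta_y0:
  assumes "admissible TYPE('k::field) d" shows "beta d x (0::'k) = 0"
proof (cases "d_bk d")
  case Bsum
  hence p: "CHAR('k) > 0" using assms by (simp add: admissible_def)
  show ?thesis using Bsum p by (auto simp: beta_def Let_def intro!: sum.neutral)
next
  case Bmono
  hence p: "CHAR('k) > 0" using assms by (simp add: admissible_def)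
  show ?thesis using Bmono p by (auto simp: beta_def Let_def)
next
  case TypeB
  hence p: "CHAR('k) > 2" using assms by (simp add: admissible_def)
  show ?thesis using TypeB p by (auto simp: beta_def Let_def power_0_left)
qed (simp add: beta_def)

lemma psi2_x0:
  assumes "admissible TYPE('k::field) d" shows "psi2 d (0::'k) y = 0"
  using assms by (auto simp: psi2_def admissible_def)

lemma psi2_y0:
  assumes "admissible TYPE('k::field) d" shows "psi2 d x (0::'k) = 0"
  using assms by (auto simp: psi2_def admissible_def)

lemma psi1_x0:
  assumes "admissible TYPE('k::field) d" shows "psi1 d (0::'k) y2 y3 = 0"
  using assms h3_pos[of "TYPE('k)" d] by (simp add: psi1_def beta_x0)

lemma psi1_y0:
  assumes "admissible TYPE('k::field) d" shows "psi1 d (x::'k) y2 0 = y2 ^ h2 TYPE('k) d * x ^ h3 TYPE('k) d"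
  using assms by (simp add: psi1_def beta_y0)

lemma psi1_y20:
  assumes "admissible TYPE('k::field) d" shows "psi1 d (x::'k) 0 y3 = beta d x y3"
  using assms h2_pos[of "TYPE('k)" d] by (simp add: psi1_def)


lemma pfun_line:
  assumes "f \<in> pfun gens" "\<forall>\<gamma>\<in>gens. \<exists>p. \<forall>t. \<gamma> (L t) = poly p t"
  shows "\<exists>p. \<forall>t. f (L t) = poly p t"
  using assms(1)
proof induction
  case (gen f) thus ?case using assms(2) by blast
next
  case (const c) show ?case by (intro exI[of _ "[:c:]"]) simp
next
  case (add f g)
  then obtain p q where "\<forall>t. f (L t) = poly p t" "\<forall>t. g (L t) = poly q t" by blast
  thus ?case by (intro exI[of _ "p + q"]) simp
next
  case (mul f g)
  then obtain p q where "\<forall>t. f (L t) = poly p t" "\<forall>t. g (L t) = poly q t" by blast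
  thus ?case by (intro exI[of _ "p * q"]) simp
qed

lemma pfun_laurent:
  assumes "f \<in> pfun gens" "\<forall>\<gamma>\<in>gens. \<exists>p N. \<forall>t\<in>S. \<gamma> (L t) * t ^ N = poly p t"
  shows "\<exists>p N. \<forall>t\<in>S. f (L t) * t ^ N = poly p t"
  using assms(1)
proof induction
  case (gen f) thus ?case using assms(2) by blast
next
  case (const c) show ?case by (intro exI[of _ "[:c:]"] exI[of _ 0]) simp
next
  case (add f g)
  then obtain p q N M where "\<forall>t\<in>S. f (L t) * t ^ N = poly p t" "\<forall>t\<in>S. g (L t) * t ^ M = poly q t" by blast
  have "\<forall>t\<in>S. (f (L t) + g (L t)) * t ^ (N + M) = poly (p * monom 1 M + q * monom 1 N) t"
  proof
    fix t assume t: "t \<in> S"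
    have "(f (L t) + g (L t)) * t ^ (N + M) = (f (L t) * t ^ N) * t ^ M + (g (L t) * t ^ M) * t ^ N"
      by (simp add: power_add algebra_simps)
    thus "(f (L t) + g (L t)) * t ^ (N + M) = poly (p * monom 1 M + q * monom 1 N) t" using t \<open>\<forall>t\<in>S. f (L t) * t ^ N = poly p t\<close> \<open>\<forall>t\<in>S. g (L t) * t ^ M = poly q t\<close> by (simp add: poly_monom)
  qed
  thus ?case by blast
next
  case (mul f g)
  then obtain p q N M where "\<forall>t\<in>S. f (L t) * t ^ N = poly p t" "\<forall>t\<in>S. g (L t) * t ^ M = poly q t" by blast
  have "\<forall>t\<in>S. (f (L t) * g (L t)) * t ^ (N + M) = poly (p * q) t"
  proof
    fix t assume t: "t \<in> S"
    have "(f (L t) * g (L t)) * t ^ (N + M) = (f (L t) * t ^ N) * (g (L t) * t ^ M)"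
      by (simp add: power_add mult_ac)
    thus "(f (L t) * g (L t)) * t ^ (N + M) = poly (p * q) t" using t \<open>\<forall>t\<in>S. f (L t) * t ^ N = poly p t\<close> \<open>\<forall>t\<in>S. g (L t) * t ^ M = poly q t\<close> by simp
  qed
  thus ?case by blast
qed

lemma Gregular_line:
  assumes "q \<in> (Gregular :: ((('k::field \<times> 'k \<times> 'k) \<times> 'k) \<Rightarrow> 'k) set)"
  shows "\<exists>p. \<forall>t. q ((t * u1, t * u2, t * u3), 1) = poly p t"
proof -
  have a: "\<exists>p. \<forall>t. t * u = poly p t" for u :: 'k by (rule exI[of _ "[:0,u:]"]) (simp add: mult.commute)
  have b: "\<exists>p. \<forall>t. poly p t = (1::'k)" by (rule exI[of _ "[:1:]"]) simp
  show ?thesis using assms unfolding Gregular_def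
    by (rule pfun_line) (simp add: a b)
qed

lemma Gregular_torus:
  assumes "q \<in> (Gregular :: ((('k::field \<times> 'k \<times> 'k) \<times> 'k) \<Rightarrow> 'k) set)"
  shows "\<exists>p N. \<forall>t\<in>{t. t \<noteq> 0}. q ((0, 0, 0), t) * t ^ N = poly p t"
proof -
  have a: "\<exists>p. \<forall>t::'k. t \<noteq> 0 \<longrightarrow> poly p t = 0" by (rule exI[of _ 0]) simp
  have b: "\<exists>p N. \<forall>t::'k. t \<noteq> 0 \<longrightarrow> t * t ^ N = poly p t" by (rule exI[of _ "[:0,1:]"], rule exI[of _ 0]) simp
  have c: "\<exists>p N. \<forall>t::'k. t \<noteq> 0 \<longrightarrow> inverse t * t ^ N = poly p t" by (rule exI[of _ "[:1:]"], rule exI[of _ 1]) simp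
  show ?thesis using assms unfolding Gregular_def
    by (rule pfun_laurent) (simp add: a b c)
qed

lemma Gmorph_coord:
  assumes "Gmorph F"
    "c \<in> {\<lambda>g. fst (fst g), \<lambda>g. fst (snd (fst g)), \<lambda>g. snd (snd (fst g)), \<lambda>g. snd g}"
  shows "\<exists>q\<in>Gregular. \<forall>g\<in>Gcarrier. c (F g) = (q g :: 'k::field)"
proof -
  have H: "\<forall>c\<in>{\<lambda>g. fst (fst g), \<lambda>g. fst (snd (fst g)), \<lambda>g. snd (snd (fst g)), \<lambda>g. snd g}.
        \<exists>q\<in>Gregular. \<forall>g\<in>Gcarrier. c (F g) = (q g :: 'k)"
    using assms(1) unfolding Gmorph_def by (rule conjunct2)
  show ?thesis using bspec[OF H assms(2)] .
qed

lemma Gmorph_line: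
  fixes F :: "(('k::field \<times> 'k \<times> 'k) \<times> 'k) \<Rightarrow> (('k \<times> 'k \<times> 'k) \<times> 'k)"
  assumes "Gmorph F"
    "c \<in> {\<lambda>g. fst (fst g), \<lambda>g. fst (snd (fst g)), \<lambda>g. snd (snd (fst g)), \<lambda>g. snd g}"
  shows "\<exists>p. \<forall>t. c (F ((t * u1, t * u2, t * u3), 1)) = poly p t"
proof -
  obtain q where q: "q \<in> Gregular" "\<forall>g\<in>Gcarrier. c (F g) = q g" using Gmorph_coord[OF assms] by blast
  obtain p where p: "\<forall>t. q ((t * u1, t * u2, t * u3), 1) = poly p t" using Gregular_line[OF q(1)] by blast
  have cr: "((t * u1, t * u2, t * u3), 1::'k) \<in> Gcarrier" for t by (simp add: Gcarrier_def)
  show ?thesis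
  proof (intro exI allI)
    fix t
    have "c (F ((t * u1, t * u2, t * u3), 1)) = q ((t * u1, t * u2, t * u3), 1)" using q(2) cr by blast
    also have "\<dots> = poly p t" using p by blast
    finally show "c (F ((t * u1, t * u2, t * u3), 1)) = poly p t" .
  qed
qed

lemma Gmorph_torus:
  fixes F :: "(('k::field \<times> 'k \<times> 'k) \<times> 'k) \<Rightarrow> (('k \<times> 'k \<times> 'k) \<times> 'k)"
  assumes "Gmorph F"
  shows "\<exists>p N. \<forall>t. t \<noteq> 0 \<longrightarrow> snd (F ((0, 0, 0), t)) * t ^ N = poly p t"
proof -
  obtain q where q: "q \<in> Gregular" "\<forall>g\<in>Gcarrier. snd (F g) = q g" using Gmorph_coord[OF assms, of "\<lambda>g. snd g"] by blast
  obtain p N where p: "\<forall>t\<in>{t. t \<noteq> 0}. q ((0, 0, 0), t) * t ^ N = poly p t" using Gregular_torus[OF q(1)] by blast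
  have cr: "t \<noteq> 0 \<Longrightarrow> ((0, 0, 0), t) \<in> (Gcarrier :: (('k \<times> 'k \<times> 'k) \<times> 'k) set)" for t by (simp add: Gcarrier_def)
  show ?thesis
  proof (intro exI allI impI)
    fix t :: 'k assume t: "t \<noteq> 0"
    have "snd (F ((0, 0, 0), t)) = q ((0, 0, 0), t)" using q(2) cr[OF t] by blast
    thus "snd (F ((0, 0, 0), t)) * t ^ N = poly p t" using p t by simp
  qed
qed

lemma Gmorph_line_snd: "Gmorph F \<Longrightarrow> \<exists>p. \<forall>t. snd (F ((t * u1, t * u2, t * u3), 1)) = poly p (t::'k::field)"
  by (rule Gmorph_line[where c="\<lambda>g. snd g"]) auto
lemma Gmorph_line_1: "Gmorph F \<Longrightarrow> \<exists>p. \<forall>t. fst (fst (F ((t * u1, t * u2, t * u3), 1))) = poly p (t::'k::field)"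
  by (rule Gmorph_line[where c="\<lambda>g. fst (fst g)"]) auto
lemma Gmorph_line_2: "Gmorph F \<Longrightarrow> \<exists>p. \<forall>t. fst (snd (fst (F ((t * u1, t * u2, t * u3), 1)))) = poly p (t::'k::field)"
  by (rule Gmorph_line[where c="\<lambda>g. fst (snd (fst g))"]) auto
lemma Gmorph_line_3: "Gmorph F \<Longrightarrow> \<exists>p. \<forall>t. snd (snd (fst (F ((t * u1, t * u2, t * u3), 1)))) = poly p (t::'k::field)"
  by (rule Gmorph_line[where c="\<lambda>g. snd (snd (fst g))"]) auto

lemma Gmult_U:
  "Gmult d ((x1, x2, x3), 1) ((y1, y2, y3), 1) =
     ((x1 + y1 + psi1 d x3 y2 y3, x2 + y2 + psi2 d x3 y3, x3 + (y3::'k::field)), 1)"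
  by (simp add: Gmult_def mult3_def tact_def)


definition fixb :: "gdata \<Rightarrow> (('k::field \<times> 'k \<times> 'k) \<times> 'k) \<Rightarrow> bool" where
  "fixb d g \<longleftrightarrow> (\<forall>P. snd (Gact d g P) = snd P)"

definition trv :: "gdata \<Rightarrow> (('k::field \<times> 'k \<times> 'k) \<times> 'k) \<Rightarrow> bool" where
  "trv d g \<longleftrightarrow> (\<forall>P. Gact d g P = P)"

definition c3 :: "((('k::field \<times> 'k \<times> 'k) \<times> 'k) \<Rightarrow> (('k \<times> 'k \<times> 'k) \<times> 'k)) \<Rightarrow> 'k \<Rightarrow> 'k" where
  "c3 F t = snd (snd (fst (F ((0, 0, t), 1))))"

definition c2 :: "((('k::field \<times> 'k \<times> 'k) \<times> 'k) \<Rightarrow> (('k \<times> 'k \<times> 'k) \<times> 'k)) \<Rightarrow> 'k \<Rightarrow> 'k" where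
  "c2 F t = fst (snd (fst (F ((0, t, 0), 1))))"

definition zeta :: "((('k::field \<times> 'k \<times> 'k) \<times> 'k) \<Rightarrow> (('k \<times> 'k \<times> 'k) \<times> 'k)) \<Rightarrow> 'k \<Rightarrow> 'k" where
  "zeta F t = fst (fst (F ((t, 0, 0), 1)))"

locale isoF =
  fixes d d' :: gdata and F G :: "(('k::alg_closed_field \<times> 'k \<times> 'k) \<times> 'k) \<Rightarrow> (('k \<times> 'k \<times> 'k) \<times> 'k)"
  assumes adm: "admissible TYPE('k) d" and adm': "admissible TYPE('k) d'"
    and Fc: "\<And>g. g \<in> Gcarrier \<Longrightarrow> F g \<in> Gcarrier"
    and Gc: "\<And>g. g \<in> Gcarrier \<Longrightarrow> G g \<in> Gcarrier"
    and Fhom: "\<And>g h. g \<in> Gcarrier \<Longrightarrow> h \<in> Gcarrier \<Longrightarrow> F (Gmult d g h) = Gmult d' (F g) (F h)"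
    and Ghom: "\<And>g h. g \<in> Gcarrier \<Longrightarrow> h \<in> Gcarrier \<Longrightarrow> G (Gmult d' g h) = Gmult d (G g) (G h)"
    and FG: "\<And>g. g \<in> Gcarrier \<Longrightarrow> G (F g) = g"
    and GF: "\<And>g. g \<in> Gcarrier \<Longrightarrow> F (G g) = g"
    and Fm: "Gmorph F" and Gm: "Gmorph G"
    and Fb: "\<And>g. g \<in> Gcarrier \<Longrightarrow> fixb d' (F g) = fixb d g"
    and Gb: "\<And>g. g \<in> Gcarrier \<Longrightarrow> fixb d (G g) = fixb d' g"
    and Ft: "\<And>g. g \<in> Gcarrier \<Longrightarrow> trv d' (F g) = trv d g"
    and Gt: "\<And>g. g \<in> Gcarrier \<Longrightarrow> trv d (G g) = trv d' g"
begin

lemma sym: "isoF d' d G F"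
  by (unfold_locales) (auto simp: adm adm' Fc Gc Fhom Ghom FG GF Fm Gm Fb Gb Ft Gt)

lemmas zs = psi1_x0[OF adm] psi1_x0[OF adm'] psi2_x0[OF adm] psi2_x0[OF adm']
  psi2_y0[OF adm] psi2_y0[OF adm'] beta_y0[OF adm] beta_y0[OF adm'] beta_x0[OF adm] beta_x0[OF adm']

lemma inC: "((u, 1) :: ('k \<times> 'k \<times> 'k) \<times> 'k) \<in> Gcarrier" by (simp add: Gcarrier_def)

lemma F_one: "F ((0, 0, 0), 1) = ((0, 0, 0), 1)"
proof -
  have e: "Gmult d ((0, 0, 0), 1) ((0, 0, 0), (1::'k)) = ((0, 0, 0), 1)" by (simp add: Gmult_U zs)
  obtain x1 x2 x3 b where Fe: "F ((0, 0, 0), 1) = ((x1, x2, x3), b)" by (metis prod.collapse)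
  have b0: "b \<noteq> 0" using Fc[OF inC, of "(0,0,0)"] Fe by (simp add: Gcarrier_def)
  have "F ((0, 0, 0), 1) = Gmult d' (F ((0, 0, 0), 1)) (F ((0, 0, 0), 1))"
    using Fhom[OF inC inC] e by metis
  hence eq: "((x1, x2, x3), b) = (mult3 d' (x1, x2, x3) (tact d' b (x1, x2, x3)), b * b)"
    using Fe by (simp add: Gmult_def)
  hence "b = 1" using b0 by (metis mult_cancel_left2 prod.inject)
  with eq have eq2: "((x1, x2, x3), b) = ((x1 + x1 + psi1 d' x3 x2 x3, x2 + x2 + psi2 d' x3 x3, x3 + x3), 1)"
    by (simp add: mult3_def tact_def)
  hence "x3 + x3 = x3" by simp
  hence "x3 = 0" using add_right_imp_eq[of x3 x3 0] by simp
  with eq2 have "x1 + x1 + psi1 d' 0 x2 0 = x1" "x2 + x2 + psi2 d' 0 0 = x2" by simp_all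
  hence "x1 + x1 = x1" "x2 + x2 = x2" by (simp_all add: zs)
  hence "x1 = 0" "x2 = 0" using add_right_imp_eq[of x1 x1 0] add_right_imp_eq[of x2 x2 0] by simp_all
  with Fe \<open>x3 = 0\<close> \<open>b = 1\<close> show ?thesis by simp
qed

lemma F_U: "snd g = 1 \<Longrightarrow> snd (F g) = 1"
proof -
  assume g1: "snd g = 1"
  obtain u1 u2 u3 where g: "g = ((u1, u2, u3), 1)" using g1 by (metis prod.collapse)
  obtain p where p: "\<forall>t. snd (F ((t * u1, t * u2, t * u3), 1)) = poly p t"
    using Gmorph_line_snd[OF Fm, of u1 u2 u3] by blast
  have "poly p t \<noteq> 0" for t
    using p Fc[OF inC, of "(t * u1, t * u2, t * u3)"] by (simp add: Gcarrier_def)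
  hence "poly p 1 = poly p 0" by (rule poly_noroot_const[rule_format])
  thus ?thesis using p[rule_format, of 1] p[rule_format, of 0] g by (simp add: F_one)
qed

lemma F_U': "snd (F ((u, 1))) = 1" using F_U by simp

lemma Fform: obtains x1 x2 x3 where "F ((u, 1)) = ((x1, x2, x3), 1)"
  using F_U'[of u] by (metis prod.collapse)

lemma F_third0: "snd (snd (fst (F ((u1, u2, 0), 1)))) = 0"
proof -
  have "fixb d ((u1, u2, 0), (1::'k))" by (simp add: fixb_def Gact_def split: prod.splits)
  hence fb: "fixb d' (F ((u1, u2, 0), 1))" using Fb[OF inC] by simp
  obtain x1 x2 x3 where Fx: "F ((u1, u2, 0), 1) = ((x1, x2, x3), 1)" by (rule Fform)
  from fb have "snd (Gact d' ((x1, x2, x3), 1) (0, 0)) = 0" unfolding Fx fixb_def by (metis snd_conv)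
  hence "x3 = 0" by (simp add: Gact_def)
  thus ?thesis using Fx by simp
qed

lemma c3_inv: "c3 G (c3 F t) = t"
proof -
  obtain x1 x2 x3 where Fx: "F ((0, 0, t), 1) = ((x1, x2, x3), 1)" by (rule Fform)
  have x3: "c3 F t = x3" using Fx by (simp add: c3_def)
  have dec: "((x1, x2, x3), (1::'k)) = Gmult d' ((x1, x2, 0), 1) ((0, 0, x3), 1)"
    by (simp add: Gmult_U zs)
  have "((0, 0, t), (1::'k)) = G (F ((0, 0, t), 1))" using FG[OF inC] by simp
  also have "\<dots> = Gmult d (G ((x1, x2, 0), 1)) (G ((0, 0, x3), 1))"
    using Fx dec Ghom[OF inC inC] by simp
  finally have eq: "((0, 0, t), (1::'k)) = Gmult d (G ((x1, x2, 0), 1)) (G ((0, 0, x3), 1))" .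
  obtain a1 a2 a3 where Ga: "G ((x1, x2, 0), 1) = ((a1, a2, a3), 1)" using isoF.Fform[OF sym] by blast
  have a3: "a3 = 0" using isoF.F_third0[OF sym, of x1 x2] Ga by simp
  obtain b1 b2 b3 where Gb': "G ((0, 0, x3), 1) = ((b1, b2, b3), 1)" using isoF.Fform[OF sym] by blast
  have "b3 = c3 G x3" using Gb' by (simp add: c3_def)
  with eq Ga Gb' a3 have "t = c3 G x3" by (simp add: Gmult_U)
  thus ?thesis using x3 by simp
qed

lemma c3_lin: "\<exists>c. c \<noteq> 0 \<and> (\<forall>t. c3 F t = c * t)"
proof -
  obtain P where P: "\<forall>t. snd (snd (fst (F ((t * 0, t * 0, t * 1), 1)))) = poly P t"
    using Gmorph_line_3[OF Fm, of 0 0 1] by blast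
  obtain Q where Q: "\<forall>t. snd (snd (fst (G ((t * 0, t * 0, t * 1), 1)))) = poly Q t"
    using Gmorph_line_3[OF Gm, of 0 0 1] by blast
  have P': "c3 F t = poly P t" for t using P by (simp add: c3_def)
  have Q': "c3 G t = poly Q t" for t using Q by (simp add: c3_def)
  have "\<forall>t. poly P (poly Q t) = t" using isoF.c3_inv[OF sym] by (simp add: P' Q' flip: P' Q')
  moreover have "poly P 0 = 0" using F_one by (simp add: c3_def flip: P')
  ultimately obtain c where "c \<noteq> 0" "\<forall>t. poly P t = c * t" using poly_linear by blast
  thus ?thesis by (auto simp: P')
qed

end

context isoF begin

lemma F_u2: "F ((0, s, 0), 1) = ((0, c2 F s, 0), 1)"
proof -
  have "trv d ((0, s, 0), (1::'k))" by (simp add: trv_def Gact_def zs split: prod.splits)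
  hence tb: "trv d' (F ((0, s, 0), 1))" using Ft[OF inC] by simp
  obtain x1 x2 x3 where Fx: "F ((0, s, 0), 1) = ((x1, x2, x3), 1)" by (rule Fform)
  from tb have "Gact d' ((x1, x2, x3), 1) (0, 0) = (0, 0)" unfolding Fx trv_def by blast
  hence "x3 = 0" by (simp add: Gact_def)
  with \<open>Gact d' ((x1, x2, x3), 1) (0, 0) = (0, 0)\<close> have "x1 = 0" by (simp add: Gact_def zs psi1_y20[OF adm'])
  thus ?thesis using Fx \<open>x3 = 0\<close> by (simp add: c2_def)
qed

lemma c2_inv: "c2 G (c2 F s) = s"
proof -
  have "((0, s, 0), (1::'k)) = G (F ((0, s, 0), 1))" using FG[OF inC] by simp
  also have "\<dots> = ((0, c2 G (c2 F s), 0), 1)" using F_u2 isoF.F_u2[OF sym] by simp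
  finally show ?thesis by simp
qed

lemma c2_lin: "\<exists>c. c \<noteq> 0 \<and> (\<forall>t. c2 F t = c * t)"
proof -
  obtain P where P: "\<forall>t. fst (snd (fst (F ((t * 0, t * 1, t * 0), 1)))) = poly P t"
    using Gmorph_line_2[OF Fm, of 0 1 0] by blast
  obtain Q where Q: "\<forall>t. fst (snd (fst (G ((t * 0, t * 1, t * 0), 1)))) = poly Q t"
    using Gmorph_line_2[OF Gm, of 0 1 0] by blast
  have P': "c2 F t = poly P t" for t using P by (simp add: c2_def)
  have Q': "c2 G t = poly Q t" for t using Q by (simp add: c2_def)
  have "\<forall>t. poly P (poly Q t) = t" using isoF.c2_inv[OF sym] by (simp add: P' Q' flip: P' Q')
  moreover have "poly P 0 = 0" using F_one by (simp add: c2_def flip: P')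
  ultimately obtain c where "c \<noteq> 0" "\<forall>t. poly P t = c * t" using poly_linear by blast
  thus ?thesis by (auto simp: P')
qed


lemma comm: "F ((s ^ h2 TYPE('k) d * t ^ h3 TYPE('k) d, 0, 0), 1) = (((c2 F s) ^ h2 TYPE('k) d' * (c3 F t) ^ h3 TYPE('k) d', 0, 0), 1)"
proof -
  define c where "c = s ^ h2 TYPE('k) d * t ^ h3 TYPE('k) d"
  have e1: "Gmult d ((0, 0, t), 1) ((0, s, 0), 1) = ((c, s, t), (1::'k))"
    by (simp add: Gmult_U zs psi1_y0[OF adm] c_def)
  have e2: "Gmult d ((0, s, 0), 1) ((0, 0, t), 1) = ((0, s, t), (1::'k))"
    by (simp add: Gmult_U zs)
  have e3: "Gmult d ((c, 0, 0), 1) ((0, s, t), 1) = ((c, s, t), (1::'k))"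
    by (simp add: Gmult_U zs)
  obtain x1 x2 x3 where Fg: "F ((0, 0, t), 1) = ((x1, x2, x3), 1)" by (rule Fform)
  have x3: "x3 = c3 F t" using Fg by (simp add: c3_def)
  obtain y1 y2 y3 where Fz: "F ((c, 0, 0), 1) = ((y1, y2, y3), 1)" by (rule Fform)
  have "F ((c, s, t), 1) = Gmult d' (F ((0, 0, t), 1)) (F ((0, s, 0), 1))"
    using Fhom[OF inC inC] e1 by metis
  also have "\<dots> = ((x1 + (c2 F s) ^ h2 TYPE('k) d' * x3 ^ h3 TYPE('k) d', x2 + c2 F s, x3), 1)"
    by (simp add: Fg F_u2 Gmult_U zs psi1_y0[OF adm'])
  finally have L: "F ((c, s, t), 1) = ((x1 + (c2 F s) ^ h2 TYPE('k) d' * x3 ^ h3 TYPE('k) d', x2 + c2 F s, x3), 1)" .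
  have "F ((c, s, t), 1) = Gmult d' (F ((c, 0, 0), 1)) (Gmult d' (F ((0, s, 0), 1)) (F ((0, 0, t), 1)))"
    using Fhom[OF inC inC] e2 e3 by metis
  also have "\<dots> = Gmult d' ((y1, y2, y3), 1) ((x1, c2 F s + x2, x3), 1)"
    by (simp add: Fg Fz F_u2 Gmult_U zs)
  finally have R: "F ((c, s, t), 1) = Gmult d' ((y1, y2, y3), 1) ((x1, c2 F s + x2, x3), 1)" .
  from L R have "y3 = 0" by (simp add: Gmult_U)
  with L R have "y1 = (c2 F s) ^ h2 TYPE('k) d' * x3 ^ h3 TYPE('k) d'" "y2 = 0" by (simp_all add: Gmult_U zs)
  thus ?thesis using Fz x3 \<open>y3 = 0\<close> by (simp add: c_def)
qed

lemma zeta_line: "F ((c, 0, 0), 1) = ((zeta F c, 0, 0), 1)"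
proof -
  obtain t where t: "t ^ h3 TYPE('k) d = c" using nth_root_exists[OF h3_pos] by blast
  have "F ((c, 0, 0), 1) = F ((1 ^ h2 TYPE('k) d * t ^ h3 TYPE('k) d, 0, 0), 1)" using t by simp
  also have "\<dots> = (((c2 F 1) ^ h2 TYPE('k) d' * (c3 F t) ^ h3 TYPE('k) d', 0, 0), 1)" by (rule comm)
  finally show ?thesis by (simp add: zeta_def)
qed

lemma zeta_inv: "zeta G (zeta F c) = c"
proof -
  have "((c, 0, 0), (1::'k)) = G (F ((c, 0, 0), 1))" using FG[OF inC] by simp
  also have "\<dots> = ((zeta G (zeta F c), 0, 0), 1)" using zeta_line isoF.zeta_line[OF sym] by simp
  finally show ?thesis by simp
qed

lemma zeta_lin: "\<exists>c. c \<noteq> 0 \<and> (\<forall>t. zeta F t = c * t)"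
proof -
  obtain P where P: "\<forall>t. fst (fst (F ((t * 1, t * 0, t * 0), 1))) = poly P t"
    using Gmorph_line_1[OF Fm, of 1 0 0] by blast
  obtain Q where Q: "\<forall>t. fst (fst (G ((t * 1, t * 0, t * 0), 1))) = poly Q t"
    using Gmorph_line_1[OF Gm, of 1 0 0] by blast
  have P': "zeta F t = poly P t" for t using P by (simp add: zeta_def)
  have Q': "zeta G t = poly Q t" for t using Q by (simp add: zeta_def)
  have "\<forall>t. poly P (poly Q t) = t" using isoF.zeta_inv[OF sym] by (simp add: P' Q' flip: P' Q')
  moreover have "poly P 0 = 0" using F_one by (simp add: zeta_def flip: P')
  ultimately obtain c where "c \<noteq> 0" "\<forall>t. poly P t = c * t" using poly_linear by blast
  thus ?thesis by (auto simp: P')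
qed

lemma h_eq: "h2 TYPE('k) d' = h2 TYPE('k) d \<and> h3 TYPE('k) d' = h3 TYPE('k) d"
proof -
  obtain a2 where a2: "a2 \<noteq> 0" "\<forall>t. c2 F t = a2 * t" using c2_lin by blast
  obtain a3 where a3: "a3 \<noteq> 0" "\<forall>t. c3 F t = a3 * t" using c3_lin by blast
  obtain k where k: "k \<noteq> 0" "\<forall>t. zeta F t = k * t" using zeta_lin by blast
  have main: "k * (s ^ h2 TYPE('k) d * t ^ h3 TYPE('k) d) = (a2 * s) ^ h2 TYPE('k) d' * (a3 * t) ^ h3 TYPE('k) d'" for s t
    using comm[of s t] zeta_line[of "s ^ h2 TYPE('k) d * t ^ h3 TYPE('k) d"] a2 a3 k by simp
  have "\<forall>t. k * t ^ h3 TYPE('k) d = (a2 ^ h2 TYPE('k) d' * a3 ^ h3 TYPE('k) d') * t ^ h3 TYPE('k) d'"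
    using main[of 1] by (simp add: power_mult_distrib mult_ac)
  hence "h3 TYPE('k) d = h3 TYPE('k) d'" using monom_fun_eq k(1) by blast
  have "\<forall>s. k * s ^ h2 TYPE('k) d = (a2 ^ h2 TYPE('k) d' * a3 ^ h3 TYPE('k) d') * s ^ h2 TYPE('k) d'"
    using main[of _ 1] by (simp add: power_mult_distrib mult_ac)
  hence "h2 TYPE('k) d = h2 TYPE('k) d'" using monom_fun_eq k(1) by blast
  thus ?thesis using \<open>h3 TYPE('k) d = h3 TYPE('k) d'\<close> by simp
qed

end

context isoF begin

lemma mult3_0l: "mult3 d (0, 0, 0) (y :: 'k \<times> 'k \<times> 'k) = y"
  by (cases y) (simp add: mult3_def zs)

lemma mult3_0r: "mult3 d (y :: 'k \<times> 'k \<times> 'k) (0, 0, 0) = y"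
  by (cases y) (simp add: mult3_def zs psi1_y20[OF adm])

lemma torus_comm:
  assumes a: "a \<noteq> 0"
  shows "F (Gmult d ((0, 0, 0), a) (v, 1)) = F (Gmult d (tact d a v, 1) ((0, 0, 0), a))"
proof -
  have "Gmult d ((0, 0, 0), a) (v, 1) = (tact d a v, a)"
    by (simp add: Gmult_def mult3_0l)
  moreover have "Gmult d (tact d a v, 1) ((0, 0, 0), a) = (tact d a v, a)"
    by (simp add: Gmult_def tact_def mult3_0r)
  ultimately show ?thesis by simp
qed

lemma torus_rel:
  assumes a: "a \<noteq> 0"
  shows "c3 F (a ^ d_e3 d * t) = (snd (F ((0, 0, 0), a))) ^ d_e3 d' * c3 F t"
    and "c2 F (a powi d_e2 d * s) = (snd (F ((0, 0, 0), a))) powi d_e2 d' * c2 F s"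
proof -
  have aC: "((0, 0, 0), a) \<in> (Gcarrier :: (('k \<times> 'k \<times> 'k) \<times> 'k) set)" using a by (simp add: Gcarrier_def)
  obtain w1 w2 w3 b where Fa: "F ((0, 0, 0), a) = ((w1, w2, w3), b)" by (metis prod.collapse)
  have key: "Gmult d' ((w1, w2, w3), b) (F (v, 1)) = Gmult d' (F (tact d a v, 1)) ((w1, w2, w3), b)" for v
    using torus_comm[OF a, of v] Fhom[OF aC inC] Fhom[OF inC aC] Fa by metis
  obtain x1 x2 x3 where Fx: "F ((0, 0, t), 1) = ((x1, x2, x3), 1)" by (rule Fform)
  obtain z1 z2 z3 where Fz: "F ((0, 0, a ^ d_e3 d * t), 1) = ((z1, z2, z3), 1)" by (rule Fform)
  have "tact d a (0, 0, t) = (0, 0, a ^ d_e3 d * t)" by (simp add: tact_def)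
  with key[of "(0, 0, t)"] Fx Fz have "w3 + b ^ d_e3 d' * x3 = z3 + w3"
    by (simp add: Gmult_def mult3_def tact_def)
  thus "c3 F (a ^ d_e3 d * t) = (snd (F ((0, 0, 0), a))) ^ d_e3 d' * c3 F t"
    using Fx Fz Fa by (simp add: c3_def)
  have "tact d a (0, s, 0) = (0, a powi d_e2 d * s, 0)" by (simp add: tact_def)
  with key[of "(0, s, 0)"] have "w2 + b powi d_e2 d' * c2 F s = c2 F (a powi d_e2 d * s) + w2"
    by (simp add: Gmult_def mult3_def tact_def F_u2 zs)
  thus "c2 F (a powi d_e2 d * s) = (snd (F ((0, 0, 0), a))) powi d_e2 d' * c2 F s"
    using Fa by simp
qed

lemma e3_pos: "d_e3 d > 0"
  using adm by (auto simp: admissible_def split: if_splits)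

lemma chi_rel:
  assumes a: "a \<noteq> 0"
  shows "(snd (F ((0, 0, 0), a))) ^ d_e3 d' = a ^ d_e3 d"
    and "(snd (F ((0, 0, 0), a))) powi d_e2 d' = a powi d_e2 d"
proof -
  obtain a3 where a3: "a3 \<noteq> 0" "\<forall>t. c3 F t = a3 * t" using c3_lin by blast
  obtain a2 where a2: "a2 \<noteq> 0" "\<forall>t. c2 F t = a2 * t" using c2_lin by blast
  show "(snd (F ((0, 0, 0), a))) ^ d_e3 d' = a ^ d_e3 d"
    using torus_rel(1)[OF a, of 1] a3 by simp
  show "(snd (F ((0, 0, 0), a))) powi d_e2 d' = a powi d_e2 d"
    using torus_rel(2)[OF a, of 1] a2 by simp
qed

lemma e3_dvd: "d_e3 d' dvd d_e3 d"
proof -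
  obtain P N where P: "\<forall>t. t \<noteq> 0 \<longrightarrow> snd (F ((0, 0, 0), t)) * t ^ N = poly P t"
    using Gmorph_torus[OF Fm] by blast
  have "\<forall>t\<in>{t. t \<noteq> 0}. poly (P ^ d_e3 d') t = poly (monom 1 (d_e3 d + N * d_e3 d')) t"
  proof
    fix t :: 'k assume "t \<in> {t. t \<noteq> 0}"
    hence t: "t \<noteq> 0" by simp
    have "poly (P ^ d_e3 d') t = (snd (F ((0, 0, 0), t)) * t ^ N) ^ d_e3 d'" using P t by (simp add: poly_power)
    also have "\<dots> = t ^ d_e3 d * t ^ (N * d_e3 d')" using chi_rel(1)[OF t]
      by (simp add: power_mult_distrib power_mult)
    finally show "poly (P ^ d_e3 d') t = poly (monom 1 (d_e3 d + N * d_e3 d')) t"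
      by (simp add: poly_monom power_add)
  qed
  hence eq: "P ^ d_e3 d' = monom 1 (d_e3 d + N * d_e3 d')" by (rule poly_eq_on_infinite[OF nonzero_infinite])
  have "P \<noteq> 0" using eq isoF.e3_pos[OF sym] by (auto simp: zero_power)
  hence "degree (P ^ d_e3 d') = degree P * d_e3 d'" by (simp add: degree_power_eq)
  hence "degree P * d_e3 d' = d_e3 d + N * d_e3 d'" using eq by (simp add: degree_monom_eq)
  hence "d_e3 d' dvd d_e3 d + N * d_e3 d'" by (metis dvd_triv_right)
  moreover have "d_e3 d' dvd N * d_e3 d'" by simp
  ultimately show ?thesis by (simp add: dvd_add_left_iff)
qed

end

context isoF begin

lemma e3_eq: "d_e3 d' = d_e3 d"
  using e3_dvd isoF.e3_dvd[OF sym] by (simp add: dvd_antisym)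

lemma chi_id:
  assumes a: "a \<noteq> 0" shows "snd (F ((0, 0, 0), a)) = a"
proof -
  define b where "b = snd (F ((0, 0, 0), a))"
  have eq: "b ^ d_e3 d = a ^ d_e3 d" using chi_rel(1)[OF a] e3_eq by (simp add: b_def)
  show ?thesis
  proof (cases "CHAR('k) = 0")
    case True
    hence "d_e3 d = 1" using adm by (simp add: admissible_def)
    thus ?thesis using eq by (simp add: b_def)
  next
    case False
    then obtain t where t: "d_e3 d = CHAR('k) ^ t" using adm by (auto simp: admissible_def)
    have pr: "prime CHAR('k)" using False prime_CHAR_semidom by blast
    have "((b - a) + a) ^ d_e3 d = (b - a) ^ d_e3 d + a ^ d_e3 d"
      by (rule freshmans_dream'[OF pr t])
    hence "(b - a) ^ d_e3 d = 0" using eq by simp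
    hence "b - a = 0" by simp
    thus ?thesis by (simp add: b_def)
  qed
qed

lemma e2_eq: "d_e2 d' = d_e2 d"
proof -
  have "\<forall>a::'k. a \<noteq> 0 \<longrightarrow> a powi d_e2 d' = a powi d_e2 d"
    using chi_rel(2) chi_id by simp
  thus ?thesis by (rule powi_all_eq)
qed

end

lemma Gmult_closed: "g \<in> Gcarrier \<Longrightarrow> h \<in> Gcarrier \<Longrightarrow> Gmult d g h \<in> (Gcarrier :: (('k::field \<times> 'k \<times> 'k) \<times> 'k) set)"
  by (auto simp: Gcarrier_def Gmult_def split: prod.splits)

lemma snd_equiv:
  fixes \<Phi>2 :: "'a \<times> 'b \<Rightarrow> 'c \<times> 'd"
  assumes inj: "inj \<Phi>2" and L: "\<forall>c. \<exists>c'. \<Phi>2 ` {P. snd P = c} = {P. snd P = c'}"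
  shows "snd (\<Phi>2 P) = snd (\<Phi>2 Q) \<longleftrightarrow> snd P = snd Q"
proof
  assume h: "snd P = snd Q"
  obtain c' where c': "\<Phi>2 ` {R. snd R = snd P} = {R. snd R = c'}" using L[rule_format, of "snd P"] by (elim exE)
  have "\<Phi>2 P \<in> \<Phi>2 ` {R. snd R = snd P}" by (rule imageI) simp
  hence 1: "snd (\<Phi>2 P) = c'" unfolding c' by simp
  have "Q \<in> {R. snd R = snd P}" using h by simp
  hence "\<Phi>2 Q \<in> \<Phi>2 ` {R. snd R = snd P}" by (rule imageI)
  hence 2: "snd (\<Phi>2 Q) = c'" unfolding c' by simp
  from 1 2 show "snd (\<Phi>2 P) = snd (\<Phi>2 Q)" by simp
next
  assume h: "snd (\<Phi>2 P) = snd (\<Phi>2 Q)"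
  obtain c1 where c1: "\<Phi>2 ` {R. snd R = snd P} = {R. snd R = c1}" using L[rule_format, of "snd P"] by (elim exE)
  obtain c2 where c2: "\<Phi>2 ` {R. snd R = snd Q} = {R. snd R = c2}" using L[rule_format, of "snd Q"] by (elim exE)
  have "\<Phi>2 P \<in> \<Phi>2 ` {R. snd R = snd P}" by (rule imageI) simp
  hence 1: "snd (\<Phi>2 P) = c1" unfolding c1 by simp
  have "\<Phi>2 Q \<in> \<Phi>2 ` {R. snd R = snd Q}" by (rule imageI) simp
  hence 2: "snd (\<Phi>2 Q) = c2" unfolding c2 by simp
  have "c1 = c2" using 1 2 h by simp
  hence 4: "\<Phi>2 ` {R. snd R = snd P} = \<Phi>2 ` {R. snd R = snd Q}" by (simp only: c1 c2)
  have 3: "{R :: 'a \<times> 'b. snd R = snd P} = {R. snd R = snd Q}" using 4 inj by (simp only: inj_image_eq_iff)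
  have "P \<in> {R :: 'a \<times> 'b. snd R = snd P}" by simp
  hence "P \<in> {R :: 'a \<times> 'b. snd R = snd Q}" unfolding 3 .
  thus "snd P = snd Q" by simp
qed
theorem mainTheorem17:
  fixes d d' :: gdata
    and \<Phi>1 :: "(('k::alg_closed_field \<times> 'k \<times> 'k) \<times> 'k) \<Rightarrow> (('k \<times> 'k \<times> 'k) \<times> 'k)"
    and \<Phi>2 :: "'k \<times> 'k \<Rightarrow> 'k \<times> 'k"
  assumes "admissible TYPE('k) d"
    and "admissible TYPE('k) d'"
    and "alg_perm_iso TYPE('k) d d' \<Phi>1 \<Phi>2"
  shows "(d_e2 d', d_e3 d', h2 TYPE('k) d', h3 TYPE('k) d')
       = (d_e2 d, d_e3 d, h2 TYPE('k) d, h3 TYPE('k) d)"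
proof -
  note iso = assms(3)[unfolded alg_perm_iso_def]
  have bijb: "bij_betw \<Phi>1 Gcarrier Gcarrier" using iso by blast
  have hom: "\<And>g h. g \<in> Gcarrier \<Longrightarrow> h \<in> Gcarrier \<Longrightarrow> \<Phi>1 (Gmult d g h) = Gmult d' (\<Phi>1 g) (\<Phi>1 h)"
    using iso by blast
  have Fm: "Gmorph \<Phi>1" using iso by blast
  obtain \<Psi> where Gm: "Gmorph \<Psi>" and inv: "\<forall>g \<in> Gcarrier. \<Psi> (\<Phi>1 g) = g \<and> \<Phi>1 (\<Psi> g) = g"
    using iso by blast
  have bij2: "bij \<Phi>2" using iso by blast
  have L: "\<forall>c. \<exists>c'. \<Phi>2 ` {P. snd P = c} = {P. snd P = c'}" using iso by blast
  have eqv: "\<And>g P. g \<in> Gcarrier \<Longrightarrow> \<Phi>2 (Gact d g P) = Gact d' (\<Phi>1 g) (\<Phi>2 P)" using iso by blast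
  have Fc: "\<And>g. g \<in> Gcarrier \<Longrightarrow> \<Phi>1 g \<in> Gcarrier" using bijb bij_betwE by blast
  have Gc: "\<And>g. g \<in> Gcarrier \<Longrightarrow> \<Psi> g \<in> Gcarrier" using Gm unfolding Gmorph_def by blast
  have FG: "\<And>g. g \<in> Gcarrier \<Longrightarrow> \<Psi> (\<Phi>1 g) = g" using inv by blast
  have GF: "\<And>g. g \<in> Gcarrier \<Longrightarrow> \<Phi>1 (\<Psi> g) = g" using inv by blast
  have Ghom: "\<Psi> (Gmult d' g h) = Gmult d (\<Psi> g) (\<Psi> h)" if "g \<in> Gcarrier" "h \<in> Gcarrier" for g h
  proof -
    have "\<Phi>1 (Gmult d (\<Psi> g) (\<Psi> h)) = Gmult d' g h" using hom[OF Gc Gc] GF that by simp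
    hence "\<Psi> (Gmult d' g h) = \<Psi> (\<Phi>1 (Gmult d (\<Psi> g) (\<Psi> h)))" by simp
    also have "\<dots> = Gmult d (\<Psi> g) (\<Psi> h)" using FG Gmult_closed Gc that by blast
    finally show ?thesis .
  qed
  have inj2: "inj \<Phi>2" and surj2: "surj \<Phi>2" using bij2 by (auto simp: bij_def)
  have Fb: "fixb d' (\<Phi>1 g) = fixb d g" if g: "g \<in> Gcarrier" for g
  proof -
    have "fixb d' (\<Phi>1 g) \<longleftrightarrow> (\<forall>P. snd (Gact d' (\<Phi>1 g) (\<Phi>2 P)) = snd (\<Phi>2 P))"
      unfolding fixb_def using surj2 by (metis surjD)
    also have "\<dots> \<longleftrightarrow> (\<forall>P. snd (\<Phi>2 (Gact d g P)) = snd (\<Phi>2 P))" using eqv[OF g] by simp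
    also have "\<dots> \<longleftrightarrow> fixb d g" unfolding fixb_def using snd_equiv[OF inj2 L] by simp
    finally show ?thesis .
  qed
  have Ft: "trv d' (\<Phi>1 g) = trv d g" if g: "g \<in> Gcarrier" for g
  proof -
    have "trv d' (\<Phi>1 g) \<longleftrightarrow> (\<forall>P. Gact d' (\<Phi>1 g) (\<Phi>2 P) = \<Phi>2 P)"
      unfolding trv_def using surj2 by (metis surjD)
    also have "\<dots> \<longleftrightarrow> (\<forall>P. \<Phi>2 (Gact d g P) = \<Phi>2 P)" using eqv[OF g] by simp
    also have "\<dots> \<longleftrightarrow> trv d g" unfolding trv_def using inj2 by (simp add: inj_eq)
    finally show ?thesis .
  qed
  have Gb: "fixb d (\<Psi> g) = fixb d' g" if "g \<in> Gcarrier" for g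
    using Fb[OF Gc[OF that]] GF[OF that] by simp
  have Gt: "trv d (\<Psi> g) = trv d' g" if "g \<in> Gcarrier" for g
    using Ft[OF Gc[OF that]] GF[OF that] by simp
  interpret isoF d d' \<Phi>1 \<Psi>
    by (unfold_locales) (use assms(1,2) Fc Gc hom Ghom FG GF Fm Gm Fb Gb Ft Gt in auto)
  show ?thesis using e2_eq e3_eq h_eq by simp
qed
end
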